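(* For $(a,b)\in\mathbb{R}^2$, let $\mathfrak{g}_{a,b}$ be the $8$-dimensional real nilpotent Lie algebra with a basis $\{e^1,\dots,e^8\}$ of its dual satisfying $$de^1=de^2=de^3=0,\quad de^4=e^{13},\quad de^5=e^{23},\quad de^6=3e^{14}+e^{25}-2e^{35},$$ $$de^7=2a\,e^{12}+e^{15}+e^{24}+2e^{34},\quad de^8=-2b\,e^{14}+e^{16}-2b\,e^{25}+e^{27}-2e^{45}.$$ If $\mathfrak{g}_{a,b}$ and $\mathfrak{g}_{a',b'}$ are isomorphic, then there is a non-zero real number $\rho$ such that $a'=\pm\rho a$ and $b'=\rho b$.
   Context: $e^{ij}=e^i\wedge e^j$, and $d$ denotes the Chevalley–Eilenberg differential, $d\alpha(X,Y)=-\alpha([X,Y])$ for $\alpha\in\mathfrak{g}^*$; these equations define the Lie bracket. *)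

theory Defs
  imports "HOL-Analysis.Analysis"
begin

text \<open>The Lie algebra g_{a,b} is realised on real^8. Basis vector e_k (k = 1..8)
  is the standard basis vector with index of_nat (k-1) :: 8; e^k is the dual coordinate.\<close>

definition cf :: "real^8 \<Rightarrow> nat \<Rightarrow> real" where
  "cf x k = x $ (of_nat (k - 1) :: 8)"

definition ebas :: "nat \<Rightarrow> real^8" where
  "ebas k = axis (of_nat (k - 1) :: 8) 1"

definition w2 :: "nat \<Rightarrow> nat \<Rightarrow> real^8 \<Rightarrow> real^8 \<Rightarrow> real" where
  "w2 i j x y = cf x i * cf y j - cf x j * cf y i"

definition dE :: "real \<Rightarrow> real \<Rightarrow> nat \<Rightarrow> real^8 \<Rightarrow> real^8 \<Rightarrow> real" where
  "dE a b k x y =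
    (if k = 4 then w2 1 3 x y
     else if k = 5 then w2 2 3 x y
     else if k = 6 then 3 * w2 1 4 x y + w2 2 5 x y - 2 * w2 3 5 x y
     else if k = 7 then 2 * a * w2 1 2 x y + w2 1 5 x y + w2 2 4 x y + 2 * w2 3 4 x y
     else if k = 8 then - 2 * b * w2 1 4 x y + w2 1 6 x y - 2 * b * w2 2 5 x y
                        + w2 2 7 x y - 2 * w2 4 5 x y
     else 0)"

text \<open>Lie bracket determined by d alpha (x,y) = - alpha([x,y]).\<close>
definition lie_br :: "real \<Rightarrow> real \<Rightarrow> real^8 \<Rightarrow> real^8 \<Rightarrow> real^8" where
  "lie_br a b x y = (\<Sum>k\<in>{1..8}. (- dE a b k x y) *\<^sub>R ebas k)"

definition lie_iso :: "(real^8 \<Rightarrow> real^8) \<Rightarrow> real \<Rightarrow> real \<Rightarrow> real \<Rightarrow> real \<Rightarrow> bool" where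
  "lie_iso f a b a' b' \<longleftrightarrow> linear f \<and> bij f \<and>
     (\<forall>x y. f (lie_br a b x y) = lie_br a' b' (f x) (f y))"

definition lie_isomorphic :: "real \<Rightarrow> real \<Rightarrow> real \<Rightarrow> real \<Rightarrow> bool" where
  "lie_isomorphic a b a' b' \<longleftrightarrow> (\<exists>f. lie_iso f a b a' b')"

end

theory Submission
  imports Defs
begin

lemma of_nat_8_inj: "m \<in> {1..8} \<Longrightarrow> j \<in> {1..8} \<Longrightarrow> ((of_nat (m - 1) :: 8) = of_nat (j - 1)) = (m = j)"
proof -
  assume "m \<in> {1..8}" "j \<in> {1..8}"
  then have "m \<in> {1,2,3,4,5,6,7,8}" "j \<in> {1,2,3,4,5,6,7,8}" by auto
  then show ?thesis by (elim insertE; simp)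
qed

lemma cf_ebas: "m \<in> {1..8} \<Longrightarrow> j \<in> {1..8} \<Longrightarrow> cf (ebas j) m = (if m = j then 1 else 0)"
  unfolding cf_def ebas_def axis_def using of_nat_8_inj by auto

lemma cf_lie: "k \<in> {1..8} \<Longrightarrow> cf (lie_br a b x y) k = - dE a b k x y"
proof -
  assume k: "k \<in> {1..8}"
  have "cf (lie_br a b x y) k = (\<Sum>m\<in>{1..8}. (- dE a b m x y) * cf (ebas m) k)"
    unfolding lie_br_def cf_def by (simp add: sum_component)
  also have "\<dots> = (\<Sum>m\<in>{1..8}. if k = m then - dE a b m x y else 0)"
    by (rule sum.cong) (use k cf_ebas in auto)
  also have "\<dots> = - dE a b k x y" using k by simp
  finally show ?thesis .
qed

lemma f_lie: "linear f \<Longrightarrow> cf (f (lie_br a b x y)) k = (\<Sum>m\<in>{1..8}. (- dE a b m x y) * cf (f (ebas m)) k)"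
  unfolding lie_br_def by (simp add: linear_sum linear_scale linear_neg cf_def sum_component o_def)

lemma main_eq:
  assumes "lie_iso f a b a' b'" "k \<in> {1..8}"
  shows "(\<Sum>m\<in>{1..8}. (- dE a b m (ebas i) (ebas j)) * cf (f (ebas m)) k) = - dE a' b' k (f (ebas i)) (f (ebas j))"
proof -
  have L: "linear f" and H: "f (lie_br a b (ebas i) (ebas j)) = lie_br a' b' (f (ebas i)) (f (ebas j))"
    using assms(1) unfolding lie_iso_def by blast+
  have "(\<Sum>m\<in>{1..8}. (- dE a b m (ebas i) (ebas j)) * cf (f (ebas m)) k) = cf (f (lie_br a b (ebas i) (ebas j))) k"
    by (rule f_lie[OF L, symmetric])
  also have "\<dots> = cf (lie_br a' b' (f (ebas i)) (f (ebas j))) k" by (simp only: H)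
  also have "\<dots> = - dE a' b' k (f (ebas i)) (f (ebas j))" by (rule cf_lie[OF assms(2)])
  finally show ?thesis .
qed

lemma s8: "{1..8::nat} = {1,2,3,4,5,6,7,8}" by auto

lemma exhaust_8:
  fixes x :: 8
  shows "\<exists>k\<in>{1..8::nat}. x = of_nat (k - 1)"
proof (induct x)
  case (of_int z)
  then have "z \<ge> 0" by simp
  show ?case
  proof (rule bexI[of _ "nat z + 1"])
    show "of_int z = (of_nat (nat z + 1 - 1) :: 8)" using \<open>z \<ge> 0\<close> by simp
    show "nat z + 1 \<in> {1..8}" using of_int by auto
  qed
qed

declare cf_ebas[simp]

lemma alg:
  fixes F :: "nat \<Rightarrow> nat \<Rightarrow> real" and a b a' b' :: real
  assumes h131: "F 1 4 = 0"
  and h132: "F 2 4 = 0"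
  and h133: "F 3 4 = 0"
  and h134: "- F 4 4 = F 3 1 * F 1 3 - F 1 1 * F 3 3"
  and h135: "- F 5 4 = F 3 1 * F 2 3 - F 2 1 * F 3 3"
  and h136: "- F 6 4 = 2 * (F 3 1 * F 5 3) - 2 * (F 5 1 * F 3 3) - (3 * (F 1 1 * F 4 3) - 3 * (F 4 1 * F 1 3) + (F 2 1 * F 5 3 - F 5 1 * F 2 3))"
  and h137: "- F 7 4 = F 5 1 * F 1 3 - F 1 1 * F 5 3 - 2 * a' * (F 1 1 * F 2 3 - F 2 1 * F 1 3) + (F 4 1 * F 2 3 - F 2 1 * F 4 3) + (2 * (F 4 1 * F 3 3) - 2 * (F 3 1 * F 4 3))"
  and h138: "- F 8 4 = 2 * (F 4 1 * F 5 3) - 2 * (F 5 1 * F 4 3) - (F 1 1 * F 6 3 - F 6 1 * F 1 3 - 2 * b' * (F 1 1 * F 4 3 - F 4 1 * F 1 3) - 2 * b' * (F 2 1 * F 5 3 - F 5 1 * F 2 3) + (F 2 1 * F 7 3 - F 7 1 * F 2 3))"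
  and h231: "F 1 5 = 0"
  and h232: "F 2 5 = 0"
  and h233: "F 3 5 = 0"
  and h234: "- F 4 5 = F 3 2 * F 1 3 - F 1 2 * F 3 3"
  and h235: "- F 5 5 = F 3 2 * F 2 3 - F 2 2 * F 3 3"
  and h236: "- F 6 5 = 2 * (F 3 2 * F 5 3) - 2 * (F 5 2 * F 3 3) - (3 * (F 1 2 * F 4 3) - 3 * (F 4 2 * F 1 3) + (F 2 2 * F 5 3 - F 5 2 * F 2 3))"
  and h237: "- F 7 5 = F 5 2 * F 1 3 - F 1 2 * F 5 3 - 2 * a' * (F 1 2 * F 2 3 - F 2 2 * F 1 3) + (F 4 2 * F 2 3 - F 2 2 * F 4 3) + (2 * (F 4 2 * F 3 3) - 2 * (F 3 2 * F 4 3))"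
  and h238: "- F 8 5 = 2 * (F 4 2 * F 5 3) - 2 * (F 5 2 * F 4 3) - (F 1 2 * F 6 3 - F 6 2 * F 1 3 - 2 * b' * (F 1 2 * F 4 3 - F 4 2 * F 1 3) - 2 * b' * (F 2 2 * F 5 3 - F 5 2 * F 2 3) + (F 2 2 * F 7 3 - F 7 2 * F 2 3))"
  and h351: "F 1 6 = 0"
  and h352: "F 2 6 = 0"
  and h353: "F 3 6 = 0"
  and h354: "2 * F 4 6 = F 3 3 * F 1 5 - F 1 3 * F 3 5"
  and h355: "2 * F 5 6 = F 3 3 * F 2 5 - F 2 3 * F 3 5"
  and h356: "2 * F 6 6 = 2 * (F 3 3 * F 5 5) - 2 * (F 5 3 * F 3 5) - (3 * (F 1 3 * F 4 5) - 3 * (F 4 3 * F 1 5) + (F 2 3 * F 5 5 - F 5 3 * F 2 5))"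
  and h357: "2 * F 7 6 = F 5 3 * F 1 5 - F 1 3 * F 5 5 - 2 * a' * (F 1 3 * F 2 5 - F 2 3 * F 1 5) + (F 4 3 * F 2 5 - F 2 3 * F 4 5) + (2 * (F 4 3 * F 3 5) - 2 * (F 3 3 * F 4 5))"
  and h358: "2 * F 8 6 = 2 * (F 4 3 * F 5 5) - 2 * (F 5 3 * F 4 5) - (F 1 3 * F 6 5 - F 6 3 * F 1 5 - 2 * b' * (F 1 3 * F 4 5 - F 4 3 * F 1 5) - 2 * b' * (F 2 3 * F 5 5 - F 5 3 * F 2 5) + (F 2 3 * F 7 5 - F 7 3 * F 2 5))"
  and h151: "F 1 7 = 0"
  and h152: "F 2 7 = 0"
  and h153: "F 3 7 = 0"
  and h154: "- F 4 7 = F 3 1 * F 1 5 - F 1 1 * F 3 5"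
  and h155: "- F 5 7 = F 3 1 * F 2 5 - F 2 1 * F 3 5"
  and h156: "- F 6 7 = 2 * (F 3 1 * F 5 5) - 2 * (F 5 1 * F 3 5) - (3 * (F 1 1 * F 4 5) - 3 * (F 4 1 * F 1 5) + (F 2 1 * F 5 5 - F 5 1 * F 2 5))"
  and h157: "- F 7 7 = F 5 1 * F 1 5 - F 1 1 * F 5 5 - 2 * a' * (F 1 1 * F 2 5 - F 2 1 * F 1 5) + (F 4 1 * F 2 5 - F 2 1 * F 4 5) + (2 * (F 4 1 * F 3 5) - 2 * (F 3 1 * F 4 5))"
  and h158: "- F 8 7 = 2 * (F 4 1 * F 5 5) - 2 * (F 5 1 * F 4 5) - (F 1 1 * F 6 5 - F 6 1 * F 1 5 - 2 * b' * (F 1 1 * F 4 5 - F 4 1 * F 1 5) - 2 * b' * (F 2 1 * F 5 5 - F 5 1 * F 2 5) + (F 2 1 * F 7 5 - F 7 1 * F 2 5))"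
  and h161: "F 1 8 = 0"
  and h162: "F 2 8 = 0"
  and h163: "F 3 8 = 0"
  and h164: "- F 4 8 = F 3 1 * F 1 6 - F 1 1 * F 3 6"
  and h165: "- F 5 8 = F 3 1 * F 2 6 - F 2 1 * F 3 6"
  and h166: "- F 6 8 = 2 * (F 3 1 * F 5 6) - 2 * (F 5 1 * F 3 6) - (3 * (F 1 1 * F 4 6) - 3 * (F 4 1 * F 1 6) + (F 2 1 * F 5 6 - F 5 1 * F 2 6))"
  and h167: "- F 7 8 = F 5 1 * F 1 6 - F 1 1 * F 5 6 - 2 * a' * (F 1 1 * F 2 6 - F 2 1 * F 1 6) + (F 4 1 * F 2 6 - F 2 1 * F 4 6) + (2 * (F 4 1 * F 3 6) - 2 * (F 3 1 * F 4 6))"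
  and h168: "- F 8 8 = 2 * (F 4 1 * F 5 6) - 2 * (F 5 1 * F 4 6) - (F 1 1 * F 6 6 - F 6 1 * F 1 6 - 2 * b' * (F 1 1 * F 4 6 - F 4 1 * F 1 6) - 2 * b' * (F 2 1 * F 5 6 - F 5 1 * F 2 6) + (F 2 1 * F 7 6 - F 7 1 * F 2 6))"
  and h458: "2 * F 8 8 = 2 * (F 4 4 * F 5 5) - 2 * (F 5 4 * F 4 5) - (F 1 4 * F 6 5 - F 6 4 * F 1 5 - 2 * b' * (F 1 4 * F 4 5 - F 4 4 * F 1 5) - 2 * b' * (F 2 4 * F 5 5 - F 5 4 * F 2 5) + (F 2 4 * F 7 5 - F 7 4 * F 2 5))"
  and h124: "- (2 * a * F 4 7) = F 3 1 * F 1 2 - F 1 1 * F 3 2"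
  and h125: "- (2 * a * F 5 7) = F 3 1 * F 2 2 - F 2 1 * F 3 2"
  and h126: "- (2 * a * F 6 7) = 2 * (F 3 1 * F 5 2) - 2 * (F 5 1 * F 3 2) - (3 * (F 1 1 * F 4 2) - 3 * (F 4 1 * F 1 2) + (F 2 1 * F 5 2 - F 5 1 * F 2 2))"
  and h127: "- (2 * a * F 7 7) = F 5 1 * F 1 2 - F 1 1 * F 5 2 - 2 * a' * (F 1 1 * F 2 2 - F 2 1 * F 1 2) + (F 4 1 * F 2 2 - F 2 1 * F 4 2) + (2 * (F 4 1 * F 3 2) - 2 * (F 3 1 * F 4 2))"
  and h128: "- (2 * a * F 8 7) = 2 * (F 4 1 * F 5 2) - 2 * (F 5 1 * F 4 2) - (F 1 1 * F 6 2 - F 6 1 * F 1 2 - 2 * b' * (F 1 1 * F 4 2 - F 4 1 * F 1 2) - 2 * b' * (F 2 1 * F 5 2 - F 5 1 * F 2 2) + (F 2 1 * F 7 2 - F 7 1 * F 2 2))"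
  and h146: "2 * b * F 6 8 - 3 * F 6 6 = 2 * (F 3 1 * F 5 4) - 2 * (F 5 1 * F 3 4) - (3 * (F 1 1 * F 4 4) - 3 * (F 4 1 * F 1 4) + (F 2 1 * F 5 4 - F 5 1 * F 2 4))"
  and h147: "2 * b * F 7 8 - 3 * F 7 6 = F 5 1 * F 1 4 - F 1 1 * F 5 4 - 2 * a' * (F 1 1 * F 2 4 - F 2 1 * F 1 4) + (F 4 1 * F 2 4 - F 2 1 * F 4 4) + (2 * (F 4 1 * F 3 4) - 2 * (F 3 1 * F 4 4))"
  and h148: "2 * b * F 8 8 - 3 * F 8 6 = 2 * (F 4 1 * F 5 4) - 2 * (F 5 1 * F 4 4) - (F 1 1 * F 6 4 - F 6 1 * F 1 4 - 2 * b' * (F 1 1 * F 4 4 - F 4 1 * F 1 4) - 2 * b' * (F 2 1 * F 5 4 - F 5 1 * F 2 4) + (F 2 1 * F 7 4 - F 7 1 * F 2 4))"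
  and h256: "2 * b * F 6 8 - F 6 6 = 2 * (F 3 2 * F 5 5) - 2 * (F 5 2 * F 3 5) - (3 * (F 1 2 * F 4 5) - 3 * (F 4 2 * F 1 5) + (F 2 2 * F 5 5 - F 5 2 * F 2 5))"
  and h257: "2 * b * F 7 8 - F 7 6 = F 5 2 * F 1 5 - F 1 2 * F 5 5 - 2 * a' * (F 1 2 * F 2 5 - F 2 2 * F 1 5) + (F 4 2 * F 2 5 - F 2 2 * F 4 5) + (2 * (F 4 2 * F 3 5) - 2 * (F 3 2 * F 4 5))"
  and h258: "2 * b * F 8 8 - F 8 6 = 2 * (F 4 2 * F 5 5) - 2 * (F 5 2 * F 4 5) - (F 1 2 * F 6 5 - F 6 2 * F 1 5 - 2 * b' * (F 1 2 * F 4 5 - F 4 2 * F 1 5) - 2 * b' * (F 2 2 * F 5 5 - F 5 2 * F 2 5) + (F 2 2 * F 7 5 - F 7 2 * F 2 5))"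
  and h247: "- F 7 7 = F 5 2 * F 1 4 - F 1 2 * F 5 4 - 2 * a' * (F 1 2 * F 2 4 - F 2 2 * F 1 4) + (F 4 2 * F 2 4 - F 2 2 * F 4 4) + (2 * (F 4 2 * F 3 4) - 2 * (F 3 2 * F 4 4))"
  and h248: "- F 8 7 = 2 * (F 4 2 * F 5 4) - 2 * (F 5 2 * F 4 4) - (F 1 2 * F 6 4 - F 6 2 * F 1 4 - 2 * b' * (F 1 2 * F 4 4 - F 4 2 * F 1 4) - 2 * b' * (F 2 2 * F 5 4 - F 5 2 * F 2 4) + (F 2 2 * F 7 4 - F 7 2 * F 2 4))"
  and h346: "- (2 * F 6 7) = 2 * (F 3 3 * F 5 4) - 2 * (F 5 3 * F 3 4) - (3 * (F 1 3 * F 4 4) - 3 * (F 4 3 * F 1 4) + (F 2 3 * F 5 4 - F 5 3 * F 2 4))"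
  and h347: "- (2 * F 7 7) = F 5 3 * F 1 4 - F 1 3 * F 5 4 - 2 * a' * (F 1 3 * F 2 4 - F 2 3 * F 1 4) + (F 4 3 * F 2 4 - F 2 3 * F 4 4) + (2 * (F 4 3 * F 3 4) - 2 * (F 3 3 * F 4 4))"
  and h348: "- (2 * F 8 7) = 2 * (F 4 3 * F 5 4) - 2 * (F 5 3 * F 4 4) - (F 1 3 * F 6 4 - F 6 3 * F 1 4 - 2 * b' * (F 1 3 * F 4 4 - F 4 3 * F 1 4) - 2 * b' * (F 2 3 * F 5 4 - F 5 3 * F 2 4) + (F 2 3 * F 7 4 - F 7 3 * F 2 4))"
  and h368: "0 = - (- 2*b'*(F 1 3 * F 4 6 - F 4 3 * F 1 6) + (F 1 3 * F 6 6 - F 6 3 * F 1 6) - 2*b'*(F 2 3*F 5 6 - F 5 3*F 2 6) + (F 2 3 * F 7 6 - F 7 3 * F 2 6) - 2*(F 4 3*F 5 6 - F 5 3*F 4 6))"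
  and nz: "\<not> (F 1 8 = 0 \<and> F 2 8 = 0 \<and> F 3 8 = 0 \<and> F 4 8 = 0 \<and> F 5 8 = 0 \<and> F 6 8 = 0 \<and> F 7 8 = 0 \<and> F 8 8 = 0)"
  shows "\<exists>\<rho>::real. \<rho> \<noteq> 0 \<and> (a' = \<rho> * a \<or> a' = - \<rho> * a) \<and> b' = \<rho> * b"
proof -
  note Z1 = h131 h132 h133 h231 h232 h233 h351 h352 h353 h151 h152 h153 h161 h162 h163
  have z46: "F 4 6 = 0" using h354 Z1 by simp
  have z56: "F 5 6 = 0" using h355 Z1 by simp
  have z47: "F 4 7 = 0" using h154 Z1 by simp
  have z57: "F 5 7 = 0" using h155 Z1 by simp
  have z48: "F 4 8 = 0" using h164 Z1 by simp
  have z58: "F 5 8 = 0" using h165 Z1 by simp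
  have z68: "F 6 8 = 0" using h166 Z1 z46 z56 by simp
  have z78: "F 7 8 = 0" using h167 Z1 z46 z56 by simp
  note Z = Z1 z46 z56 z47 z57 z48 z58 z68 z78
  have w1: "F 3 1 * F 1 2 = F 1 1 * F 3 2" using h124 Z by simp
  have w2: "F 3 1 * F 2 2 = F 2 1 * F 3 2" using h125 Z by simp
  have d44: "F 4 4 = F 1 1 * F 3 3 - F 3 1 * F 1 3" using h134 by simp
  have d54: "F 5 4 = F 2 1 * F 3 3 - F 3 1 * F 2 3" using h135 by simp
  have d45: "F 4 5 = F 1 2 * F 3 3 - F 3 2 * F 1 3" using h234 by simp
  have d55: "F 5 5 = F 2 2 * F 3 3 - F 3 2 * F 2 3" using h235 by simp
  have nz8: "F 8 8 \<noteq> 0" using nz Z by auto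
  have e88: "F 8 8 = F 4 4 * F 5 5 - F 5 4 * F 4 5" using h458 Z by simp
  have D: "F 4 4 * F 5 5 - F 5 4 * F 4 5 = F 3 3^2 * (F 1 1 * F 2 2 - F 2 1 * F 1 2)"
    using d44 d54 d45 d55 w1 w2 by algebra
  have kz: "F 1 1 * F 2 2 - F 2 1 * F 1 2 \<noteq> 0" and cz: "F 3 3 \<noteq> 0" using nz8 e88 D by auto
  have "F 3 1 * (F 1 1 * F 2 2 - F 2 1 * F 1 2) = 0" using w1 w2 by algebra
  hence z31: "F 3 1 = 0" using kz by simp
  have "F 3 2 * (F 1 1 * F 2 2 - F 2 1 * F 1 2) = 0" using w1 w2 by algebra
  hence z32: "F 3 2 = 0" using kz by simp
  define p where "p = F 1 1"
  define q where "q = F 1 2"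
  define r where "r = F 1 3"
  define g where "g = F 2 1"
  define t where "t = F 2 2"
  define u where "u = F 2 3"
  define c where "c = F 3 3"
  note defs = p_def q_def r_def g_def t_def u_def c_def
  have k0: "p * t - g * q \<noteq> 0" using kz unfolding defs by simp
  have c0: "c \<noteq> 0" using cz unfolding defs by simp
  have f44: "F 4 4 = p * c" using d44 z31 unfolding defs by simp
  have f54: "F 5 4 = g * c" using d54 z31 unfolding defs by simp
  have f45: "F 4 5 = q * c" using d45 z32 unfolding defs by simp
  have f55: "F 5 5 = t * c" using d55 z32 unfolding defs by simp
  note ZZ = Z z31 z32
  have E1: "3 * F 6 6 = c * (3*p^2 + g^2)" using h146 ZZ f44 f54 f45 f55 unfolding defs by algebra
  have E2: "F 6 6 = c * (3*q^2 + t^2)" using h256 ZZ f44 f54 f45 f55 unfolding defs by algebra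
  have F1: "3 * F 7 6 = 2 * c * p * g" using h147 ZZ f44 f54 f45 f55 unfolding defs by algebra
  have F2: "F 7 6 = 2 * c * q * t" using h257 ZZ f44 f54 f45 f55 unfolding defs by algebra
  have "c * (3*p^2 + g^2 - 3*(3*q^2+t^2)) = 0" using E1 E2 by algebra
  hence A: "3*p^2 + g^2 = 3*(3*q^2+t^2)" using c0 by simp
  have "c * (p*g - 3*q*t) = 0" using F1 F2 by algebra
  hence B: "p*g = 3*q*t" using c0 by simp
  have P1: "(p^2 - t^2) * (p^2 - 3*q^2) = 0" using A B by algebra
  have "p^2 \<noteq> 3*q^2"
  proof
    assume "p^2 = 3*q^2"
    hence "(p*t - g*q)^2 = 0" using A B by algebra
    thus False using k0 by simp
  qed
  hence pt: "p^2 = t^2" using P1 by simp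
  have sq: "g^2 = 9*q^2" using A pt by algebra
  note FF = ZZ f44 f54 f45 f55 defs
  have "c * (2*(3*p*q + g*t) - (3*r*p + u*g - 2*c*g)) = 0" using h156 h346 FF by algebra
  hence C: "2*(3*p*q + g*t) = 3*r*p + u*g - 2*c*g" using c0 by simp
  have "c * (-2*(3*q^2+t^2) - (3*r*q + u*t - 2*c*t)) = 0" using h356 E2 FF by algebra
  hence D: "-2*(3*q^2+t^2) = 3*r*q + u*t - 2*c*t" using c0 by simp
  have "c * (2*(p*t+g*q) - (r*g + u*p + 2*c*p)) = 0" using h157 h347 FF by algebra
  hence G: "2*(p*t+g*q) = r*g + u*p + 2*c*p" using c0 by simp
  have "c * (-4*q*t - (r*t + u*q + 2*c*q)) = 0" using h357 F2 FF by algebra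
  hence H: "-4*q*t = r*t + u*q + 2*c*q" using c0 by simp
  have "(3*p*q - g*t)^2 = 0" using pt sq B by algebra
  hence gt: "g*t = 3*p*q" by simp
  have pq: "p*q*(2*t + c) = 0" using C H gt by algebra
  have pp: "p*(t^2 + 3*q^2 - c*t) = 0" using D G gt by algebra
  have p0: "p \<noteq> 0"
  proof
    assume p0: "p = 0"
    hence t0: "t = 0" using pt by simp
    have "g \<noteq> 0" "q \<noteq> 0" using k0 p0 by auto
    have "g * (u - 2*c) = 0" using C p0 t0 by algebra
    hence "u = 2*c" using \<open>g \<noteq> 0\<close> by simp
    have "q * (u + 2*c) = 0" using H p0 t0 by algebra
    hence "u = -2*c" using \<open>q \<noteq> 0\<close> by simp
    thus False using \<open>u = 2*c\<close> c0 by simp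
  qed
  have t0: "t \<noteq> 0" using p0 pt by auto
  have q1: "q*(2*t+c) = 0" using pq p0 by simp
  have q2: "t^2 + 3*q^2 = c*t" using pp p0 by simp
  have q0: "q = 0"
  proof (rule ccontr)
    assume "q \<noteq> 0"
    hence "c = -2*t" using q1 by simp
    hence "3*t^2 + 3*q^2 = 0" using q2 by algebra
    moreover have "t^2 \<ge> 0" "q^2 > 0" using \<open>q \<noteq> 0\<close> by auto
    ultimately show False by simp
  qed
  have g0: "g = 0" using sq q0 by simp
  have "t * (t - c) = 0" using q2 q0 by algebra
  hence ct: "c = t" using t0 by simp
  have "u * t = 0" using D q0 ct by algebra
  hence u0: "u = 0" using t0 by simp
  have f66: "F 6 6 = t^3" using E2 q0 ct by algebra
  have f76: "F 7 6 = 0" using F2 q0 by simp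
  have "r * F 6 6 = 0" using h368 FF f76 u0 by algebra
  hence r0: "r = 0" using f66 t0 by simp
  note G0 = FF q0 g0 r0 u0 ct
  have R1: "t * F 5 1 = 3 * p * F 4 2" using h126 h156 G0 by algebra
  have f64: "F 6 4 = 2 * t * F 5 1 + 3 * p * F 4 3" using h136 G0 by algebra
  have f75: "F 7 5 = t * F 4 3 - 2 * t * F 4 2" using h237 G0 by algebra
  have f86: "F 8 6 = F 4 3 * t^2" using h358 G0 by algebra
  have f88: "F 8 8 = p * t^3" using h168 G0 f66 f76 by algebra
  have B1: "2*b*p*t^3 = -4*p*t*F 5 1 + 2*b'*t^3" using h148 G0 f64 f86 f88 pt by algebra
  have B2: "2*b*p*t^3 = 4*F 4 2*t^2 + 2*b'*t^3" using h258 G0 f75 f86 f88 by algebra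
  have "t * (p * F 5 1 + t * F 4 2) = 0" using B1 B2 by algebra
  hence B3: "p * F 5 1 + t * F 4 2 = 0" using t0 by simp
  have "t^2 * F 4 2 = 0" using B3 R1 pt by algebra
  hence m2: "F 4 2 = 0" using t0 by simp
  have "t^3 * (b' - b * p) = 0" using B2 m2 by algebra
  hence bb: "b' = p * b" using t0 by simp
  have f65: "F 6 5 = 2 * t * F 5 2 + t * F 5 3" using h236 G0 by algebra
  have f87: "F 8 7 = p * F 6 5 - 2 * F 4 1 * t^2" using h158 G0 by algebra
  have f87': "F 8 7 = F 5 3 * p * t" using h348 G0 f44 by algebra
  have "t * (p * F 5 2 - t * F 4 1) = 0" using f65 f87 f87' by algebra
  hence L: "p * F 5 2 = t * F 4 1" using t0 by simp
  have f77: "F 7 7 = p * t^2" using h157 G0 by algebra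
  have "p * t * (a' - a * t) = 0" using h127 G0 f77 L by algebra
  hence aa: "a' = a * t" using p0 t0 by simp
  have "t = p \<or> t = - p" using pt by algebra
  hence "a' = p * a \<or> a' = - p * a" using aa by auto
  thus ?thesis using p0 bb by blast
qed

theorem proposition3p1:
  fixes a b a' b' :: real
  assumes "lie_isomorphic a b a' b'"
  shows "\<exists>\<rho>::real. \<rho> \<noteq> 0 \<and> (a' = \<rho> * a \<or> a' = - \<rho> * a) \<and> b' = \<rho> * b"
proof -
  obtain f where iso: "lie_iso f a b a' b'" using assms unfolding lie_isomorphic_def by blast
  have lin: "linear f" and bj: "bij f" using iso unfolding lie_iso_def by auto
  define F where "F = (\<lambda>k j. cf (f (ebas j)) k)"
  have Fd: "\<And>k j. cf (f (ebas j)) k = F k j" unfolding F_def by simp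
  note h131 = main_eq[OF iso, where k=1 and i=1 and j=3, unfolded s8 dE_def w2_def Fd, simplified, simplified One_nat_def[symmetric]]
  note h132 = main_eq[OF iso, where k=2 and i=1 and j=3, unfolded s8 dE_def w2_def Fd, simplified, simplified One_nat_def[symmetric]]
  note h133 = main_eq[OF iso, where k=3 and i=1 and j=3, unfolded s8 dE_def w2_def Fd, simplified, simplified One_nat_def[symmetric]]
  note h134 = main_eq[OF iso, where k=4 and i=1 and j=3, unfolded s8 dE_def w2_def Fd, simplified, simplified One_nat_def[symmetric]]
  note h135 = main_eq[OF iso, where k=5 and i=1 and j=3, unfolded s8 dE_def w2_def Fd, simplified, simplified One_nat_def[symmetric]]
  note h136 = main_eq[OF iso, where k=6 and i=1 and j=3, unfolded s8 dE_def w2_def Fd, simplified, simplified One_nat_def[symmetric]]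
  note h137 = main_eq[OF iso, where k=7 and i=1 and j=3, unfolded s8 dE_def w2_def Fd, simplified, simplified One_nat_def[symmetric]]
  note h138 = main_eq[OF iso, where k=8 and i=1 and j=3, unfolded s8 dE_def w2_def Fd, simplified, simplified One_nat_def[symmetric]]
  note h231 = main_eq[OF iso, where k=1 and i=2 and j=3, unfolded s8 dE_def w2_def Fd, simplified, simplified One_nat_def[symmetric]]
  note h232 = main_eq[OF iso, where k=2 and i=2 and j=3, unfolded s8 dE_def w2_def Fd, simplified, simplified One_nat_def[symmetric]]
  note h233 = main_eq[OF iso, where k=3 and i=2 and j=3, unfolded s8 dE_def w2_def Fd, simplified, simplified One_nat_def[symmetric]]
  note h234 = main_eq[OF iso, where k=4 and i=2 and j=3, unfolded s8 dE_def w2_def Fd, simplified, simplified One_nat_def[symmetric]]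
  note h235 = main_eq[OF iso, where k=5 and i=2 and j=3, unfolded s8 dE_def w2_def Fd, simplified, simplified One_nat_def[symmetric]]
  note h236 = main_eq[OF iso, where k=6 and i=2 and j=3, unfolded s8 dE_def w2_def Fd, simplified, simplified One_nat_def[symmetric]]
  note h237 = main_eq[OF iso, where k=7 and i=2 and j=3, unfolded s8 dE_def w2_def Fd, simplified, simplified One_nat_def[symmetric]]
  note h238 = main_eq[OF iso, where k=8 and i=2 and j=3, unfolded s8 dE_def w2_def Fd, simplified, simplified One_nat_def[symmetric]]
  note h351 = main_eq[OF iso, where k=1 and i=3 and j=5, unfolded s8 dE_def w2_def Fd, simplified, simplified One_nat_def[symmetric]]
  note h352 = main_eq[OF iso, where k=2 and i=3 and j=5, unfolded s8 dE_def w2_def Fd, simplified, simplified One_nat_def[symmetric]]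
  note h353 = main_eq[OF iso, where k=3 and i=3 and j=5, unfolded s8 dE_def w2_def Fd, simplified, simplified One_nat_def[symmetric]]
  note h354 = main_eq[OF iso, where k=4 and i=3 and j=5, unfolded s8 dE_def w2_def Fd, simplified, simplified One_nat_def[symmetric]]
  note h355 = main_eq[OF iso, where k=5 and i=3 and j=5, unfolded s8 dE_def w2_def Fd, simplified, simplified One_nat_def[symmetric]]
  note h356 = main_eq[OF iso, where k=6 and i=3 and j=5, unfolded s8 dE_def w2_def Fd, simplified, simplified One_nat_def[symmetric]]
  note h357 = main_eq[OF iso, where k=7 and i=3 and j=5, unfolded s8 dE_def w2_def Fd, simplified, simplified One_nat_def[symmetric]]
  note h358 = main_eq[OF iso, where k=8 and i=3 and j=5, unfolded s8 dE_def w2_def Fd, simplified, simplified One_nat_def[symmetric]]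
  note h151 = main_eq[OF iso, where k=1 and i=1 and j=5, unfolded s8 dE_def w2_def Fd, simplified, simplified One_nat_def[symmetric]]
  note h152 = main_eq[OF iso, where k=2 and i=1 and j=5, unfolded s8 dE_def w2_def Fd, simplified, simplified One_nat_def[symmetric]]
  note h153 = main_eq[OF iso, where k=3 and i=1 and j=5, unfolded s8 dE_def w2_def Fd, simplified, simplified One_nat_def[symmetric]]
  note h154 = main_eq[OF iso, where k=4 and i=1 and j=5, unfolded s8 dE_def w2_def Fd, simplified, simplified One_nat_def[symmetric]]
  note h155 = main_eq[OF iso, where k=5 and i=1 and j=5, unfolded s8 dE_def w2_def Fd, simplified, simplified One_nat_def[symmetric]]
  note h156 = main_eq[OF iso, where k=6 and i=1 and j=5, unfolded s8 dE_def w2_def Fd, simplified, simplified One_nat_def[symmetric]]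
  note h157 = main_eq[OF iso, where k=7 and i=1 and j=5, unfolded s8 dE_def w2_def Fd, simplified, simplified One_nat_def[symmetric]]
  note h158 = main_eq[OF iso, where k=8 and i=1 and j=5, unfolded s8 dE_def w2_def Fd, simplified, simplified One_nat_def[symmetric]]
  note h161 = main_eq[OF iso, where k=1 and i=1 and j=6, unfolded s8 dE_def w2_def Fd, simplified, simplified One_nat_def[symmetric]]
  note h162 = main_eq[OF iso, where k=2 and i=1 and j=6, unfolded s8 dE_def w2_def Fd, simplified, simplified One_nat_def[symmetric]]
  note h163 = main_eq[OF iso, where k=3 and i=1 and j=6, unfolded s8 dE_def w2_def Fd, simplified, simplified One_nat_def[symmetric]]
  note h164 = main_eq[OF iso, where k=4 and i=1 and j=6, unfolded s8 dE_def w2_def Fd, simplified, simplified One_nat_def[symmetric]]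
  note h165 = main_eq[OF iso, where k=5 and i=1 and j=6, unfolded s8 dE_def w2_def Fd, simplified, simplified One_nat_def[symmetric]]
  note h166 = main_eq[OF iso, where k=6 and i=1 and j=6, unfolded s8 dE_def w2_def Fd, simplified, simplified One_nat_def[symmetric]]
  note h167 = main_eq[OF iso, where k=7 and i=1 and j=6, unfolded s8 dE_def w2_def Fd, simplified, simplified One_nat_def[symmetric]]
  note h168 = main_eq[OF iso, where k=8 and i=1 and j=6, unfolded s8 dE_def w2_def Fd, simplified, simplified One_nat_def[symmetric]]
  note h458 = main_eq[OF iso, where k=8 and i=4 and j=5, unfolded s8 dE_def w2_def Fd, simplified, simplified One_nat_def[symmetric]]
  note h124 = main_eq[OF iso, where k=4 and i=1 and j=2, unfolded s8 dE_def w2_def Fd, simplified, simplified One_nat_def[symmetric]]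
  note h125 = main_eq[OF iso, where k=5 and i=1 and j=2, unfolded s8 dE_def w2_def Fd, simplified, simplified One_nat_def[symmetric]]
  note h126 = main_eq[OF iso, where k=6 and i=1 and j=2, unfolded s8 dE_def w2_def Fd, simplified, simplified One_nat_def[symmetric]]
  note h127 = main_eq[OF iso, where k=7 and i=1 and j=2, unfolded s8 dE_def w2_def Fd, simplified, simplified One_nat_def[symmetric]]
  note h128 = main_eq[OF iso, where k=8 and i=1 and j=2, unfolded s8 dE_def w2_def Fd, simplified, simplified One_nat_def[symmetric]]
  note h146 = main_eq[OF iso, where k=6 and i=1 and j=4, unfolded s8 dE_def w2_def Fd, simplified, simplified One_nat_def[symmetric]]
  note h147 = main_eq[OF iso, where k=7 and i=1 and j=4, unfolded s8 dE_def w2_def Fd, simplified, simplified One_nat_def[symmetric]]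
  note h148 = main_eq[OF iso, where k=8 and i=1 and j=4, unfolded s8 dE_def w2_def Fd, simplified, simplified One_nat_def[symmetric]]
  note h256 = main_eq[OF iso, where k=6 and i=2 and j=5, unfolded s8 dE_def w2_def Fd, simplified, simplified One_nat_def[symmetric]]
  note h257 = main_eq[OF iso, where k=7 and i=2 and j=5, unfolded s8 dE_def w2_def Fd, simplified, simplified One_nat_def[symmetric]]
  note h258 = main_eq[OF iso, where k=8 and i=2 and j=5, unfolded s8 dE_def w2_def Fd, simplified, simplified One_nat_def[symmetric]]
  note h247 = main_eq[OF iso, where k=7 and i=2 and j=4, unfolded s8 dE_def w2_def Fd, simplified, simplified One_nat_def[symmetric]]
  note h248 = main_eq[OF iso, where k=8 and i=2 and j=4, unfolded s8 dE_def w2_def Fd, simplified, simplified One_nat_def[symmetric]]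
  note h346 = main_eq[OF iso, where k=6 and i=3 and j=4, unfolded s8 dE_def w2_def Fd, simplified, simplified One_nat_def[symmetric]]
  note h347 = main_eq[OF iso, where k=7 and i=3 and j=4, unfolded s8 dE_def w2_def Fd, simplified, simplified One_nat_def[symmetric]]
  note h348 = main_eq[OF iso, where k=8 and i=3 and j=4, unfolded s8 dE_def w2_def Fd, simplified, simplified One_nat_def[symmetric]]
  have h368: "0 = - (- 2*b'*(F 1 3 * F 4 6 - F 4 3 * F 1 6) + (F 1 3 * F 6 6 - F 6 3 * F 1 6) - 2*b'*(F 2 3*F 5 6 - F 5 3*F 2 6) + (F 2 3 * F 7 6 - F 7 3 * F 2 6) - 2*(F 4 3*F 5 6 - F 5 3*F 4 6))"
    using main_eq[OF iso, where k=8 and i=3 and j=6, unfolded s8 dE_def w2_def Fd, simplified, simplified One_nat_def[symmetric]] by algebra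
  have nz: "\<not> (F 1 8 = 0 \<and> F 2 8 = 0 \<and> F 3 8 = 0 \<and> F 4 8 = 0 \<and> F 5 8 = 0 \<and> F 6 8 = 0 \<and> F 7 8 = 0 \<and> F 8 8 = 0)"
  proof
    assume H: "F 1 8 = 0 \<and> F 2 8 = 0 \<and> F 3 8 = 0 \<and> F 4 8 = 0 \<and> F 5 8 = 0 \<and> F 6 8 = 0 \<and> F 7 8 = 0 \<and> F 8 8 = 0"
    have all: "\<And>k. k \<in> {1..8::nat} \<Longrightarrow> F k 8 = 0"
    proof -
      fix k :: nat assume "k \<in> {1..8}"
      then have "k \<in> {1,2,3,4,5,6,7,8}" by auto
      then show "F k 8 = 0" using H by auto
    qed
    have "f (ebas 8) = 0"
    proof (rule vec_eq_iff[THEN iffD2], rule allI)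
      fix i :: 8
      obtain k where k: "k \<in> {1..8}" "i = of_nat (k - 1)" using exhaust_8 by blast
      have "F k 8 = 0" using all k(1) .
      then show "f (ebas 8) $ i = 0 $ i" unfolding F_def cf_def k(2) by simp
    qed
    also have "\<dots> = f 0" using lin by (simp add: linear_0)
    finally have "ebas 8 = 0" using bj unfolding bij_def inj_def by blast
    moreover have "cf (ebas 8) 8 = 1" by simp
    ultimately show False unfolding cf_def by simp
  qed
  show ?thesis by (rule alg[OF h131 h132 h133 h134 h135 h136 h137 h138 h231 h232 h233 h234 h235 h236 h237 h238 h351 h352 h353 h354 h355 h356 h357 h358 h151 h152 h153 h154 h155 h156 h157 h158 h161 h162 h163 h164 h165 h166 h167 h168 h458 h124 h125 h126 h127 h128 h146 h147 h148 h256 h257 h258 h247 h248 h346 h347 h348 h368 nz])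
qed

end
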